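(* Let $h,v$ be permutations of $\Lambda=\{1,\dots,d\}$, $M\ge0$ an integer, and let $(\mu_n,\sigma_n)_{n\in\mathbb{Z}}\in(\Lambda\times\{L,R\})^{\mathbb{Z}}$ be a walk on $\Gamma^M$. Then for every finite word $w$ occurring in $(\mu_n,\sigma_n)$, the sets $A(w)$ and $D(w)$ each contain at most two letters, $A(w)$ is a $\pi_1^M$-interval, and $D(w)$ is a $\pi_0$-interval.
   Context: $\Gamma^M$ is the directed multigraph on vertex set $\Lambda$ where each vertex $\lambda$ has an edge labeled $L$ to $vh^M(\lambda)$ and an edge labeled $R$ to $vh^{M+1}(\lambda)$; a walk on $\Gamma^M$ is a sequence $(\mu_n,\sigma_n)$ with $\mu_{n+1}=vh^M(\mu_n)$ if $\sigma_n=L$ and $\mu_{n+1}=vh^{M+1}(\mu_n)$ if $\sigma_n=R$. For a finite word $w$ occurring in the sequence, $A(w)$ is the set of letters $a\in\Lambda\times\{L,R\}$ such that $aw$ occurs, and $D(w)$ the set of letters $b$ such that $wb$ occurs. $\pi_0,\pi_1^M:\Lambda\times\{L,R\}\to\{1,\dots,2d\}$ are $\pi_0(\lambda,L)=2\lambda-1$, $\pi_0(\lambda,R)=2\lambda$, $\pi_1^M(\lambda,L)=2vh^M(\lambda)$, $\pi_1^M(\lambda,R)=2vh^{M+1}(\lambda)-1$. For a bijection $\pi$, a $\pi$-interval is a set of letters whose $\pi$-values form a set of consecutive integers. *)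

theory Defs
  imports "HOL-Combinatorics.Permutations"
begin

datatype side = L | R

type_synonym letter = "nat \<times> side"

definition vh_pow :: "(nat \<Rightarrow> nat) \<Rightarrow> (nat \<Rightarrow> nat) \<Rightarrow> nat \<Rightarrow> nat \<Rightarrow> nat" where
  "vh_pow h v M = (v \<circ> h) ^^ M"

definition is_walk :: "nat \<Rightarrow> (nat \<Rightarrow> nat) \<Rightarrow> (nat \<Rightarrow> nat) \<Rightarrow> nat \<Rightarrow> (int \<Rightarrow> nat) \<Rightarrow> (int \<Rightarrow> side) \<Rightarrow> bool" where
  "is_walk d h v M \<mu> \<sigma> \<longleftrightarrow>
     (\<forall>n. \<mu> n \<in> {1..d}) \<and>
     (\<forall>n. (\<sigma> n = L \<longrightarrow> \<mu> (n+1) = vh_pow h v M (\<mu> n)) \<and>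
          (\<sigma> n = R \<longrightarrow> \<mu> (n+1) = vh_pow h v (M+1) (\<mu> n)))"

definition seq_letter :: "(int \<Rightarrow> nat) \<Rightarrow> (int \<Rightarrow> side) \<Rightarrow> int \<Rightarrow> letter" where
  "seq_letter \<mu> \<sigma> n = (\<mu> n, \<sigma> n)"

definition occurs :: "(int \<Rightarrow> nat) \<Rightarrow> (int \<Rightarrow> side) \<Rightarrow> letter list \<Rightarrow> bool" where
  "occurs \<mu> \<sigma> w \<longleftrightarrow> (\<exists>k::int. \<forall>i < length w. w ! i = seq_letter \<mu> \<sigma> (k + int i))"

definition letters :: "nat \<Rightarrow> letter set" where
  "letters d = {1..d} \<times> UNIV"

definition A_set :: "nat \<Rightarrow> (int \<Rightarrow> nat) \<Rightarrow> (int \<Rightarrow> side) \<Rightarrow> letter list \<Rightarrow> letter set" where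
  "A_set d \<mu> \<sigma> w = {a \<in> letters d. occurs \<mu> \<sigma> (a # w)}"

definition D_set :: "nat \<Rightarrow> (int \<Rightarrow> nat) \<Rightarrow> (int \<Rightarrow> side) \<Rightarrow> letter list \<Rightarrow> letter set" where
  "D_set d \<mu> \<sigma> w = {b \<in> letters d. occurs \<mu> \<sigma> (w @ [b])}"

fun pi0 :: "letter \<Rightarrow> nat" where
  "pi0 (lam, L) = 2 * lam - 1"
| "pi0 (lam, R) = 2 * lam"

fun pi1 :: "(nat \<Rightarrow> nat) \<Rightarrow> (nat \<Rightarrow> nat) \<Rightarrow> nat \<Rightarrow> letter \<Rightarrow> nat" where
  "pi1 h v M (lam, L) = 2 * vh_pow h v M lam"
| "pi1 h v M (lam, R) = 2 * vh_pow h v (M+1) lam - 1"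

definition pi_interval :: "(letter \<Rightarrow> nat) \<Rightarrow> letter set \<Rightarrow> bool" where
  "pi_interval \<pi> S \<longleftrightarrow> (\<exists>a b. \<pi> ` S = {a..b})"

end

theory Submission
  imports Defs
begin

lemma perm_pow: "f permutes S \<Longrightarrow> (f ^^ n) permutes S"
  by (induction n) (auto intro: permutes_id permutes_compose)

lemma vh_perm:
  assumes "h permutes {1..d}" "v permutes {1..d}"
  shows "vh_pow h v n permutes {1..d}"
  unfolding vh_pow_def using assms by (intro perm_pow permutes_compose)

lemma two_interval:
  assumes "S \<subseteq> {2*m-1, 2*(m::nat)}" "m \<ge> 1"
  shows "\<exists>a b. S = {a..b}"
proof -
  have "S = {} \<or> S = {2*m-1} \<or> S = {2*m} \<or> S = {2*m-1, 2*m}" using assms(1) by blast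
  moreover have "{2*m-1, 2*m} = {2*m-1..2*m}" using assms(2) by auto
  moreover have "{} = {1..(0::nat)}" by simp
  ultimately show ?thesis by (metis atLeastAtMost_singleton)
qed

theorem lemma5p4:
  fixes d M :: nat and h v :: "nat \<Rightarrow> nat"
    and \<mu> :: "int \<Rightarrow> nat" and \<sigma> :: "int \<Rightarrow> side" and w :: "letter list"
  assumes "h permutes {1..d}" and "v permutes {1..d}"
    and "is_walk d h v M \<mu> \<sigma>"
    and "w \<noteq> []" and "occurs \<mu> \<sigma> w"
  shows "card (A_set d \<mu> \<sigma> w) \<le> 2 \<and> card (D_set d \<mu> \<sigma> w) \<le> 2
    \<and> pi_interval (pi1 h v M) (A_set d \<mu> \<sigma> w)
    \<and> pi_interval pi0 (D_set d \<mu> \<sigma> w)"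
proof -
  have rng: "\<And>n. \<mu> n \<in> {1..d}" using assms(3) unfolding is_walk_def by blast
  have stL: "\<And>n. \<sigma> n = L \<Longrightarrow> \<mu> (n+1) = vh_pow h v M (\<mu> n)"
   and stR: "\<And>n. \<sigma> n = R \<Longrightarrow> \<mu> (n+1) = vh_pow h v (M+1) (\<mu> n)"
    using assms(3) unfolding is_walk_def by blast+
  define f where "f = vh_pow h v M"
  define g where "g = vh_pow h v (M+1)"
  have pf: "f permutes {1..d}" "g permutes {1..d}" unfolding f_def g_def
    by (rule vh_perm[OF assms(1,2)])+
  have injf: "inj_on f {1..d}" and injg: "inj_on g {1..d}"
    by (rule permutes_inj_on[OF pf(1)], rule permutes_inj_on[OF pf(2)])
  have fin: "\<And>x. x \<in> {1..d} \<Longrightarrow> f x \<in> {1..d}" "\<And>x. x \<in> {1..d} \<Longrightarrow> g x \<in> {1..d}"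
    using permutes_in_image[OF pf(1)] permutes_in_image[OF pf(2)] by simp_all
  obtain k where k: "\<forall>i < length w. w ! i = seq_letter \<mu> \<sigma> (k + int i)"
    using assms(5) unfolding occurs_def by blast
  define m where "m = fst (w ! 0)"
  have m: "m = \<mu> k" using k assms(4) unfolding m_def seq_letter_def by simp
  have m1: "m \<ge> 1" using rng m by auto
  define n where "n = length w"
  define lam where "lam = fst (w ! (n - 1))"
  have nz: "n > 0" using assms(4) n_def by simp
  have Asub: "A_set d \<mu> \<sigma> w \<subseteq> {p \<in> letters d. (snd p = L \<and> f (fst p) = m) \<or> (snd p = R \<and> g (fst p) = m)}"
  proof
    fix a assume "a \<in> A_set d \<mu> \<sigma> w"
    then have a: "a \<in> letters d" and oc: "occurs \<mu> \<sigma> (a # w)" unfolding A_set_def by auto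
    obtain k' where k': "\<forall>i < length (a#w). (a#w) ! i = seq_letter \<mu> \<sigma> (k' + int i)"
      using oc unfolding occurs_def by blast
    have a0: "a = (\<mu> k', \<sigma> k')" using k'[rule_format, of 0] unfolding seq_letter_def by simp
    have "w ! 0 = seq_letter \<mu> \<sigma> (k' + 1)" using k'[rule_format, of 1] assms(4) by simp
    then have mm: "m = \<mu> (k'+1)" unfolding m_def seq_letter_def by simp
    show "a \<in> {p \<in> letters d. (snd p = L \<and> f (fst p) = m) \<or> (snd p = R \<and> g (fst p) = m)}"
      using a a0 mm stL[of k'] stR[of k'] unfolding f_def g_def by (cases "\<sigma> k'") auto
  qed
  have injpi: "inj_on (pi1 h v M) (letters d)"
  proof (rule inj_onI)
    fix x y assume x: "x \<in> letters d" and y: "y \<in> letters d" and e: "pi1 h v M x = pi1 h v M y"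
    obtain x1 x2 where xx: "x = (x1,x2)" by fastforce
    obtain y1 y2 where yy: "y = (y1,y2)" by fastforce
    have x1: "x1 \<in> {1..d}" "y1 \<in> {1..d}" using x y xx yy unfolding letters_def by auto
    have ge: "f x1 \<ge> 1" "g x1 \<ge> 1" "f y1 \<ge> 1" "g y1 \<ge> 1" using fin x1 by auto
    have p1L: "\<And>z. pi1 h v M (z, L) = 2 * f z" unfolding f_def by simp
    have p1R: "\<And>z. pi1 h v M (z, R) = 2 * g z - 1" unfolding g_def by simp
    show "x = y"
    proof (cases x2; cases y2)
      assume "x2 = L" "y2 = L"
      then have "f x1 = f y1" using e xx yy p1L by simp
      then show ?thesis using inj_onD[OF injf _ x1] xx yy \<open>x2 = L\<close> \<open>y2 = L\<close> by simp
    next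
      assume "x2 = R" "y2 = R"
      then have "2 * g x1 - 1 = 2 * g y1 - 1" using e xx yy p1R by simp
      then have "g x1 = g y1" using ge by linarith
      then show ?thesis using inj_onD[OF injg _ x1] xx yy \<open>x2 = R\<close> \<open>y2 = R\<close> by simp
    next
      assume "x2 = L" "y2 = R"
      then have "2 * f x1 = 2 * g y1 - 1" using e xx yy p1L p1R by simp
      then show ?thesis using ge by presburger
    next
      assume "x2 = R" "y2 = L"
      then have "2 * g x1 - 1 = 2 * f y1" using e xx yy p1L p1R by simp
      then show ?thesis using ge by presburger
    qed
  qed
  have Aimg: "pi1 h v M ` A_set d \<mu> \<sigma> w \<subseteq> {2*m-1, 2*m}"
  proof
    fix z assume "z \<in> pi1 h v M ` A_set d \<mu> \<sigma> w"
    then obtain p where p: "p \<in> A_set d \<mu> \<sigma> w" "z = pi1 h v M p" by blast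
    obtain p1 p2 where pp: "p = (p1,p2)" by fastforce
    show "z \<in> {2*m-1, 2*m}" using Asub p pp unfolding f_def g_def by (cases p2) auto
  qed
  have Asl: "A_set d \<mu> \<sigma> w \<subseteq> letters d" unfolding A_set_def by blast
  have cardA: "card (A_set d \<mu> \<sigma> w) \<le> 2"
  proof -
    have "card (A_set d \<mu> \<sigma> w) = card (pi1 h v M ` A_set d \<mu> \<sigma> w)"
      using inj_on_subset[OF injpi Asl] by (simp add: card_image)
    also have "\<dots> \<le> card {2*m-1, 2*m}" by (rule card_mono[OF _ Aimg]) simp
    also have "\<dots> \<le> 2" by (simp add: card_insert_le_m1)
    finally show ?thesis .
  qed
  define nxt where "nxt = (if snd (w ! (n-1)) = L then f lam else g lam)"
  have nxt1: "nxt \<ge> 1" 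
  proof -
    have "lam \<in> {1..d}" using k nz n_def rng unfolding lam_def seq_letter_def by simp
    then show ?thesis using fin unfolding nxt_def by auto
  qed
  have Dsub: "D_set d \<mu> \<sigma> w \<subseteq> {(nxt, L), (nxt, R)}"
  proof
    fix b assume "b \<in> D_set d \<mu> \<sigma> w"
    then have oc: "occurs \<mu> \<sigma> (w @ [b])" unfolding D_set_def by auto
    obtain k' where k': "\<forall>i < length (w@[b]). (w@[b]) ! i = seq_letter \<mu> \<sigma> (k' + int i)"
      using oc unfolding occurs_def by blast
    have b0: "b = (\<mu> (k' + int n), \<sigma> (k' + int n))" using k'[rule_format, of n]
      unfolding seq_letter_def n_def by simp
    define q where "q = k' + int n - 1"
    have "(w@[b]) ! (n-1) = seq_letter \<mu> \<sigma> (k' + int (n-1))" using k' nz n_def by simp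
    moreover have "k' + int (n-1) = q" using nz q_def by (simp add: of_nat_diff)
    ultimately have "(w@[b]) ! (n-1) = seq_letter \<mu> \<sigma> q" by simp
    then have "w ! (n-1) = seq_letter \<mu> \<sigma> q" using nz n_def q_def
      by (simp add: nth_append)
    then have ll: "lam = \<mu> q" "snd (w ! (n-1)) = \<sigma> q" unfolding lam_def seq_letter_def by simp_all
    have qq: "k' + int n = q + 1" using nz q_def by auto
    have "\<mu> (k' + int n) = nxt"
      unfolding qq nxt_def ll using stL[of q] stR[of q] unfolding f_def g_def
      by (cases "\<sigma> q") auto
    then show "b \<in> {(nxt, L), (nxt, R)}" using b0 by (cases "\<sigma> (k' + int n)") auto
  qed
  have cardD: "card (D_set d \<mu> \<sigma> w) \<le> 2"
  proof -
    have "card (D_set d \<mu> \<sigma> w) \<le> card {(nxt, L), (nxt, R)}" by (rule card_mono[OF _ Dsub]) simp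
    also have "\<dots> \<le> 2" by (simp add: card_insert_le_m1)
    finally show ?thesis .
  qed
  have Dimg: "pi0 ` D_set d \<mu> \<sigma> w \<subseteq> {2*nxt-1, 2*nxt}" using Dsub by auto
  show ?thesis using cardA cardD two_interval[OF Aimg m1] two_interval[OF Dimg nxt1]
    unfolding pi_interval_def by blast
qed

end
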